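(* For all positive integers $k$, $\mathrm{opt}_{\mathrm{bs}}(k,2)\le \lceil k\ln k\rceil+2k$.
   Context: Let $F$ be a family of functions from a set $X$ to a set $Y$. Online learning of $F$ is a game between a learner and an adversary: the adversary secretly fixes some $f\in F$ and presents inputs $x_1,x_2,\dots\in X$ one at a time, chosen adaptively; after each input $x_t$ the learner guesses a value for $f(x_t)$. A mistake is an incorrect guess. In the standard model, after each guess the adversary reveals the true value $f(x_t)$; in the bandit model, the adversary only says YES (guess correct) or NO (guess incorrect). $\mathrm{opt}_{\mathrm{std}}(F)$ (resp. $\mathrm{opt}_{\mathrm{bs}}(F)$) is the maximum number of mistakes the learner makes in the standard (resp. bandit) model when both learner and adversary play optimally (the learner minimizing, the adversary maximizing, the adversary's answers required to be consistent with some $f\in F$). For positive integers $k,M$, $\mathrm{opt}_{\mathrm{bs}}(k,M)$ denotes the maximum of $\mathrm{opt}_{\mathrm{bs}}(F)$ over all families $F$ of functions (with arbitrary domain) with codomain $\{0,1,\dots,k-1\}$ and $\mathrm{opt}_{\mathrm{std}}(F)=M$. *)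

theory Defs
  imports Complex_Main "HOL-Library.Extended_Nat"
begin

text \<open>A state of the game is the current version space V
(the functions of the family consistent with the answers so far) together with
the remaining mistake budget m.
The learner can guarantee at most m further mistakes from version space V iff
(V, m) lies in the greatest set of states closed under the game rules
(safety game; coinductive winning region).\<close>

text \<open>Standard model: after the guess y the adversary reveals the true value v
(which must be consistent with some function in V); v \<noteq> y is a mistake.\<close>
coinductive std_win :: "'b set \<Rightarrow> ('a \<Rightarrow> 'b) set \<Rightarrow> nat \<Rightarrow> bool"
  for Y :: "'b set" where
  "(\<And>x. \<exists>y\<in>Y. \<forall>v. {f\<in>V. f x = v} \<noteq> {} \<longrightarrow>
       (if v = y then std_win Y {f\<in>V. f x = v} m
        else 0 < m \<and> std_win Y {f\<in>V. f x = v} (m - 1)))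
   \<Longrightarrow> std_win Y V m"

text \<open>Bandit model: after the guess y the adversary only answers YES (y is
correct, consistent with some function in V) or NO (a mistake, consistent with
some function in V not taking value y at x).\<close>
coinductive bs_win :: "'b set \<Rightarrow> ('a \<Rightarrow> 'b) set \<Rightarrow> nat \<Rightarrow> bool"
  for Y :: "'b set" where
  "(\<And>x. \<exists>y\<in>Y.
       ({f\<in>V. f x = y} \<noteq> {} \<longrightarrow> bs_win Y {f\<in>V. f x = y} m) \<and>
       ({f\<in>V. f x \<noteq> y} \<noteq> {} \<longrightarrow> 0 < m \<and> bs_win Y {f\<in>V. f x \<noteq> y} (m - 1)))
   \<Longrightarrow> bs_win Y V m"

text \<open>Optimal mistake bounds (infinity if no finite bound can be guaranteed).\<close>
definition opt_std :: "'b set \<Rightarrow> ('a \<Rightarrow> 'b) set \<Rightarrow> enat" where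
  "opt_std Y F = (INF m\<in>{m. std_win Y F m}. enat m)"

definition opt_bs :: "'b set \<Rightarrow> ('a \<Rightarrow> 'b) set \<Rightarrow> enat" where
  "opt_bs Y F = (INF m\<in>{m. bs_win Y F m}. enat m)"

end

theory Submission
  imports Defs
begin

lemma std_unfold:
  assumes "std_win Y V m"
  shows "\<exists>y\<in>Y. \<forall>v. {f \<in> V. f x = v} \<noteq> {} \<longrightarrow>
           (if v = y then std_win Y {f \<in> V. f x = v} m
            else 0 < m \<and> std_win Y {f \<in> V. f x = v} (m - 1))"
  using assms by (cases rule: std_win.cases) blast

lemma std_mono:
  assumes "std_win Y V m" "W \<subseteq> V"
  shows "std_win Y W m"
proof -
  have "\<exists>V. W \<subseteq> V \<and> std_win Y V m" using assms by blast
  then show ?thesis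
  proof (coinduct rule: std_win.coinduct)
    case (std_win W m)
    then obtain V where WV: "W \<subseteq> V" and sV: "std_win Y V m" by blast
    show ?case
    proof (intro exI conjI allI)
      fix x
      obtain y where y: "y \<in> Y" and H: "\<forall>v. {f \<in> V. f x = v} \<noteq> {} \<longrightarrow>
             (if v = y then std_win Y {f \<in> V. f x = v} m
              else 0 < m \<and> std_win Y {f \<in> V. f x = v} (m - 1))"
        using std_unfold[OF sV] by blast
      have sub: "{f \<in> W. f x = v} \<subseteq> {f \<in> V. f x = v}" for v using WV by auto
      show "\<exists>y\<in>Y. \<forall>v. {f \<in> W. f x = v} \<noteq> {} \<longrightarrow>
                        (if v = y
                         then (\<exists>V. {f \<in> W. f x = v} \<subseteq> V \<and> std_win Y V m) \<or>
                              std_win Y {f \<in> W. f x = v} m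
                         else 0 < m \<and>
                              ((\<exists>V. {f \<in> W. f x = v} \<subseteq> V \<and> std_win Y V (m - 1)) \<or>
                               std_win Y {f \<in> W. f x = v} (m - 1)))"
      proof (rule bexI[OF _ y], intro allI impI)
        fix v assume ne: "{f \<in> W. f x = v} \<noteq> {}"
        hence neV: "{f \<in> V. f x = v} \<noteq> {}" using sub[of v] by blast
        show "(if v = y
                         then (\<exists>V. {f \<in> W. f x = v} \<subseteq> V \<and> std_win Y V m) \<or>
                              std_win Y {f \<in> W. f x = v} m
                         else 0 < m \<and>
                              ((\<exists>V. {f \<in> W. f x = v} \<subseteq> V \<and> std_win Y V (m - 1)) \<or>
                               std_win Y {f \<in> W. f x = v} (m - 1)))"
          using H[rule_format, OF neV] sub[of v] by (auto; blast)
      qed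
    qed simp_all
  qed
qed

lemma std0_unique:
  assumes "std_win Y W 0" "f \<in> W" "g \<in> W"
  shows "f = g"
proof
  fix x
  obtain y where H: "\<forall>v. {f \<in> W. f x = v} \<noteq> {} \<longrightarrow>
           (if v = y then std_win Y {f \<in> W. f x = v} 0
            else 0 < (0::nat) \<and> std_win Y {f \<in> W. f x = v} (0 - 1))"
    using std_unfold[OF assms(1)] by blast
  have "f x = y"
  proof (rule ccontr)
    assume "f x \<noteq> y"
    moreover have "{h \<in> W. h x = f x} \<noteq> {}" using assms(2) by auto
    ultimately show False using H[rule_format, of "f x"] by auto
  qed
  moreover have "g x = y"
  proof (rule ccontr)
    assume "g x \<noteq> y"
    moreover have "{h \<in> W. h x = g x} \<noteq> {}" using assms(3) by auto
    ultimately show False using H[rule_format, of "g x"] by auto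
  qed
  ultimately show "f x = g x" by simp
qed

lemma std_empty:
  assumes "Y \<noteq> {}" shows "std_win Y {} m"
  by (rule std_win.intros) (use assms in auto)


definition G :: "nat \<Rightarrow> ('a \<Rightarrow> nat) set" where "G k = {f. \<forall>x. f x < k}"

lemma comp_point:
  assumes "std_win {..<k} A 1"
  shows "\<exists>h<k. \<forall>f\<in>A. \<forall>g\<in>A. f x = g x \<longrightarrow> f x \<noteq> h \<longrightarrow> f = g"
proof -
  obtain y where y: "y < k" and H: "\<forall>v. {f \<in> A. f x = v} \<noteq> {} \<longrightarrow>
           (if v = y then std_win {..<k} {f \<in> A. f x = v} 1
            else 0 < (1::nat) \<and> std_win {..<k} {f \<in> A. f x = v} (1 - 1))"
    using std_unfold[OF assms] by blast
  have "f = g" if "f \<in> A" "g \<in> A" "f x = g x" "f x \<noteq> y" for f g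
  proof -
    have ne: "{h \<in> A. h x = f x} \<noteq> {}" using that by auto
    have "std_win {..<k} {h \<in> A. h x = f x} 0" using H[rule_format, OF ne] that(4) by simp
    then show ?thesis by (rule std0_unique) (use that in auto)
  qed
  then show ?thesis using y by blast
qed

lemma card_fibers:
  assumes "finite S" "\<forall>s\<in>S. g s < (k::nat)"
  shows "(\<Sum>v<k. card {s\<in>S. g s = v}) = card S"
proof -
  have "card (\<Union>v\<in>{..<k}. {s\<in>S. g s = v}) = (\<Sum>v<k. card {s\<in>S. g s = v})"
    by (rule card_UN_disjoint) (use assms in auto)
  moreover have "(\<Union>v\<in>{..<k}. {s\<in>S. g s = v}) = S" using assms by auto
  ultimately show ?thesis by simp
qed

lemma no_part_card:
  assumes inj: "\<forall>f\<in>A. \<forall>g\<in>A. f x = g x \<longrightarrow> f x \<noteq> h \<longrightarrow> f = g"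
    and AG: "A \<subseteq> G k" and hk: "h < k"
  shows "finite {f\<in>A. f x \<noteq> h} \<and> card {f\<in>A. f x \<noteq> h} \<le> k - 1"
proof -
  let ?S = "{f\<in>A. f x \<noteq> h}"
  have io: "inj_on (\<lambda>f. f x) ?S" using inj by (auto simp: inj_on_def)
  have im: "(\<lambda>f. f x) ` ?S \<subseteq> {..<k} - {h}" using AG by (auto simp: G_def)
  have "finite ((\<lambda>f. f x) ` ?S)" using im by (rule finite_subset) simp
  hence fin: "finite ?S" using io finite_imageD by blast
  have "card ?S \<le> card ({..<k} - {h})" by (rule card_inj_on_le[OF io im]) simp
  also have "\<dots> \<le> k - 1" using hk by auto
  finally show ?thesis using fin by simp
qed

lemma yes_part_card:
  assumes inj: "\<forall>f\<in>A. \<forall>g\<in>A. f x = g x \<longrightarrow> f x \<noteq> h \<longrightarrow> f = g"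
    and "y \<noteq> h"
  shows "finite {f\<in>A. f x = y} \<and> card {f\<in>A. f x = y} \<le> 1"
proof -
  have "\<forall>f\<in>{f\<in>A. f x = y}. \<forall>g\<in>{f\<in>A. f x = y}. f = g" using inj assms(2) by auto
  then have "\<exists>f0. {f\<in>A. f x = y} \<subseteq> {f0}" by blast
  then obtain f0 where "{f\<in>A. f x = y} \<subseteq> {f0}" by blast
  then show ?thesis using card_mono[of "{f0}"] finite_subset[of _ "{f0}"] by auto
qed


definition inv1 :: "nat \<Rightarrow> ('a \<Rightarrow> nat) set \<Rightarrow> nat \<Rightarrow> bool" where
  "inv1 k V m \<longleftrightarrow> (\<exists>AA N j r. finite AA \<and> finite N \<and>
     (\<forall>A\<in>AA. A \<subseteq> G k \<and> std_win {..<k} A 1) \<and> N \<subseteq> G k \<and>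
     V \<subseteq> \<Union>AA \<union> N \<and> card AA + j + r \<le> m \<and>
     (k * card AA + card N) * (k - 1) ^ j \<le> (r + 1) * k ^ j)"

lemma step1:
  assumes k: "0 < k" and I: "inv1 k V m"
  shows "\<exists>y<k. inv1 k {f\<in>V. f x = y} m \<and>
     ({f\<in>V. f x \<noteq> y} \<noteq> {} \<longrightarrow> 0 < m \<and> inv1 k {f\<in>V. f x \<noteq> y} (m - 1))"
proof -
  obtain AA N j r where finA: "finite AA" and finN: "finite N"
    and comps: "\<forall>A\<in>AA. A \<subseteq> G k \<and> std_win {..<k} A 1" and NG: "N \<subseteq> G k"
    and cov: "V \<subseteq> \<Union>AA \<union> N" and bud: "card AA + j + r \<le> m"
    and pot: "(k * card AA + card N) * (k - 1) ^ j \<le> (r + 1) * k ^ j"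
    using I unfolding inv1_def by blast
  have "\<forall>A\<in>AA. \<exists>h<k. \<forall>f\<in>A. \<forall>g\<in>A. f x = g x \<longrightarrow> f x \<noteq> h \<longrightarrow> f = g"
  proof
    fix A assume "A \<in> AA"
    then have "std_win {..<k} A 1" using comps by blast
    then show "\<exists>h<k. \<forall>f\<in>A. \<forall>g\<in>A. f x = g x \<longrightarrow> f x \<noteq> h \<longrightarrow> f = g"
      by (rule comp_point)
  qed
  from bchoice[OF this] obtain h where h': "\<forall>A\<in>AA. h A < k \<and>
      (\<forall>f\<in>A. \<forall>g\<in>A. f x = g x \<longrightarrow> f x \<noteq> h A \<longrightarrow> f = g)"
    by blast
  have h: "h A < k \<and> (\<forall>f\<in>A. \<forall>g\<in>A. f x = g x \<longrightarrow> f x \<noteq> h A \<longrightarrow> f = g)" if "A \<in> AA" for A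
    using h' that by blast
  define sc where "sc v = k * card {A\<in>AA. h A = v} + card {f\<in>N. f x = v}" for v
  define Phi where "Phi = k * card AA + card N"
  have s1: "(\<Sum>v<k. card {A\<in>AA. h A = v}) = card AA"
    by (rule card_fibers) (use finA h in auto)
  have s2: "(\<Sum>v<k. card {f\<in>N. f x = v}) = card N"
    by (rule card_fibers) (use finN NG in \<open>auto simp: G_def\<close>)
  have ssum: "(\<Sum>v<k. sc v) = Phi"
    unfolding sc_def Phi_def sum.distrib sum_distrib_left[symmetric] s1 s2 ..
  have "Max (sc ` {..<k}) \<in> sc ` {..<k}" using k by (intro Max_in) auto
  then obtain y where yk: "y < k" and ymax: "sc y = Max (sc ` {..<k})" by auto
  have ymax': "sc v \<le> sc y" if "v < k" for v
    unfolding ymax by (rule Max_ge) (use that in auto)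
  have "Phi \<le> (\<Sum>v<k. sc y)" unfolding ssum[symmetric] by (rule sum_mono) (use ymax' in auto)
  hence kPhi: "Phi \<le> k * sc y" by simp
  define Ay where "Ay = {A\<in>AA. h A = y}"
  define An where "An = {A\<in>AA. h A \<noteq> y}"
  define Ny where "Ny = {f\<in>N. f x = y}"
  define Nn where "Nn = {f\<in>N. f x \<noteq> y}"
  have cA: "card AA = card Ay + card An"
  proof -
    have e: "AA = Ay \<union> An" "Ay \<inter> An = {}" by (auto simp: Ay_def An_def)
    have "finite Ay" "finite An" using finA by (auto simp: Ay_def An_def)
    then show ?thesis using e card_Un_disjoint by metis
  qed
  have cN: "card N = card Ny + card Nn"
  proof -
    have e: "N = Ny \<union> Nn" "Ny \<inter> Nn = {}" by (auto simp: Ny_def Nn_def)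
    have "finite Ny" "finite Nn" using finN by (auto simp: Ny_def Nn_def)
    then show ?thesis using e card_Un_disjoint by metis
  qed
  have scy: "sc y = k * card Ay + card Ny" unfolding sc_def Ay_def Ny_def ..
  have finAy: "finite Ay" "finite An" "finite Ny" "finite Nn"
    using finA finN by (auto simp: Ay_def An_def Ny_def Nn_def)
  define AY where "AY = (\<lambda>A. {f\<in>A. f x = y}) ` Ay"
  define NY where "NY = Ny \<union> (\<Union>A\<in>An. {f\<in>A. f x = y})"
  have ypart: "finite {f\<in>A. f x = y} \<and> card {f\<in>A. f x = y} \<le> 1" if "A \<in> An" for A
    using yes_part_card[of A x "h A" y] h[of A] that unfolding An_def by auto
  have finNY: "finite NY" unfolding NY_def using finAy ypart by auto
  have cAY: "card AY \<le> card Ay" unfolding AY_def by (rule card_image_le) fact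
  have "card NY \<le> card Ny + card (\<Union>A\<in>An. {f\<in>A. f x = y})"
    unfolding NY_def by (rule card_Un_le)
  also have "card (\<Union>A\<in>An. {f\<in>A. f x = y}) \<le> (\<Sum>A\<in>An. card {f\<in>A. f x = y})"
    by (rule card_UN_le) fact
  also have "\<dots> \<le> (\<Sum>A\<in>An. 1)" by (rule sum_mono) (use ypart in auto)
  finally have cNY: "card NY \<le> card Ny + card An" by simp
  have invY: "inv1 k {f\<in>V. f x = y} m"
    unfolding inv1_def
  proof (intro exI conjI)
    show "finite AY" unfolding AY_def using finAy by simp
    show "finite NY" by fact
    show "\<forall>A\<in>AY. A \<subseteq> G k \<and> std_win {..<k} A 1"
    proof
      fix B assume "B \<in> AY"
      then obtain A where A: "A \<in> AA" and B: "B = {f\<in>A. f x = y}" unfolding AY_def Ay_def by blast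
      have "A \<subseteq> G k" "std_win {..<k} A 1" using comps A by auto
      moreover have "B \<subseteq> A" using B by auto
      ultimately show "B \<subseteq> G k \<and> std_win {..<k} B 1" using std_mono[of "{..<k}" A 1 B] by auto
    qed
    show "NY \<subseteq> G k"
    proof
      fix f assume "f \<in> NY"
      then have "f \<in> N \<or> (\<exists>A\<in>AA. f \<in> A)" unfolding NY_def Ny_def An_def by auto
      then show "f \<in> G k" using NG comps by blast
    qed
    show "{f\<in>V. f x = y} \<subseteq> \<Union>AY \<union> NY"
    proof
      fix f assume f: "f \<in> {f\<in>V. f x = y}"
      then have "f \<in> \<Union>AA \<or> f \<in> N" using cov by auto
      then show "f \<in> \<Union>AY \<union> NY"
      proof
        assume "f \<in> \<Union>AA"
        then obtain A where A: "A \<in> AA" "f \<in> A" by auto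
        show ?thesis
        proof (cases "h A = y")
          case True
          then have "{g\<in>A. g x = y} \<in> AY" unfolding AY_def Ay_def using A by auto
          moreover have "f \<in> {g\<in>A. g x = y}" using f A by auto
          ultimately show ?thesis by blast
        next
          case False
          then have "A \<in> An" unfolding An_def using A by auto
          then show ?thesis using f A unfolding NY_def by auto
        qed
      next
        assume "f \<in> N" then show ?thesis using f unfolding NY_def Ny_def by auto
      qed
    qed
    show "card AY + j + r \<le> m" using cAY cA bud by simp
    have "k * card AY + card NY \<le> k * card AA + card N"
    proof -
      have "k * card AY \<le> k * card Ay" using cAY by simp
      moreover have "card An \<le> k * card An" using k by simp
      moreover have "k * card AA = k * card Ay + k * card An" using cA by (simp add: distrib_left)
      ultimately show ?thesis using cNY cN by linarith
    qed
    hence "(k * card AY + card NY) * (k - 1) ^ j \<le> (k * card AA + card N) * (k - 1) ^ j"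
      by (rule mult_le_mono1)
    then show "(k * card AY + card NY) * (k - 1) ^ j \<le> (r + 1) * k ^ j" using pot by linarith
  qed
  define AN where "AN = (\<lambda>A. {f\<in>A. f x \<noteq> y}) ` An"
  define NN where "NN = Nn \<union> (\<Union>A\<in>Ay. {f\<in>A. f x \<noteq> y})"
  have npart: "finite {f\<in>A. f x \<noteq> y} \<and> card {f\<in>A. f x \<noteq> y} \<le> k - 1" if "A \<in> Ay" for A
    using no_part_card[of A x "h A" k] h[of A] comps that unfolding Ay_def by auto
  have finNN: "finite NN" unfolding NN_def using finAy npart by auto
  have finAN: "finite AN" unfolding AN_def using finAy by simp
  have cAN: "card AN \<le> card An" unfolding AN_def by (rule card_image_le) fact
  have "card NN \<le> card Nn + card (\<Union>A\<in>Ay. {f\<in>A. f x \<noteq> y})"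
    unfolding NN_def by (rule card_Un_le)
  also have "card (\<Union>A\<in>Ay. {f\<in>A. f x \<noteq> y}) \<le> (\<Sum>A\<in>Ay. card {f\<in>A. f x \<noteq> y})"
    by (rule card_UN_le) fact
  also have "\<dots> \<le> (\<Sum>A\<in>Ay. k - 1)" by (rule sum_mono) (use npart in auto)
  finally have cNN: "card NN \<le> card Nn + (k - 1) * card Ay" by (simp add: mult.commute)
  have compsN: "\<forall>A\<in>AN. A \<subseteq> G k \<and> std_win {..<k} A 1"
    proof
      fix B assume "B \<in> AN"
      then obtain A where A: "A \<in> AA" and B: "B = {f\<in>A. f x \<noteq> y}" unfolding AN_def An_def by blast
      have "A \<subseteq> G k" "std_win {..<k} A 1" using comps A by auto
      moreover have "B \<subseteq> A" using B by auto
      ultimately show "B \<subseteq> G k \<and> std_win {..<k} B 1" using std_mono[of "{..<k}" A 1 B] by auto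
    qed
  have NNG: "NN \<subseteq> G k"
    proof
      fix f assume "f \<in> NN"
      then have "f \<in> N \<or> (\<exists>A\<in>AA. f \<in> A)" unfolding NN_def Nn_def Ay_def by auto
      then show "f \<in> G k" using NG comps by blast
    qed
  have covN: "{f\<in>V. f x \<noteq> y} \<subseteq> \<Union>AN \<union> NN"
    proof
      fix f assume f: "f \<in> {f\<in>V. f x \<noteq> y}"
      then have "f \<in> \<Union>AA \<or> f \<in> N" using cov by auto
      then show "f \<in> \<Union>AN \<union> NN"
      proof
        assume "f \<in> \<Union>AA"
        then obtain A where A: "A \<in> AA" "f \<in> A" by auto
        show ?thesis
        proof (cases "h A = y")
          case False
          then have "{g\<in>A. g x \<noteq> y} \<in> AN" unfolding AN_def An_def using A by auto
          moreover have "f \<in> {g\<in>A. g x \<noteq> y}" using f A by auto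
          ultimately show ?thesis by blast
        next
          case True
          then have "A \<in> Ay" unfolding Ay_def using A by auto
          then show ?thesis using f A unfolding NN_def by auto
        qed
      next
        assume "f \<in> N" then show ?thesis using f unfolding NN_def Nn_def by auto
      qed
    qed
  have invN: "0 < m \<and> inv1 k {f\<in>V. f x \<noteq> y} (m - 1)" if ne: "{f\<in>V. f x \<noteq> y} \<noteq> {}"
  proof -
    have PhiN_pos: "1 \<le> k * card AN + card NN"
    proof (rule ccontr)
      assume "\<not> 1 \<le> k * card AN + card NN"
      hence "k * card AN = 0" "card NN = 0" by linarith+
      hence "card AN = 0" "card NN = 0" using k by auto
      hence "AN = {}" "NN = {}" using finAN finNN by auto
      thus False using covN ne by auto
    qed
    have PhiN: "k * card AN + card NN \<le> k * card An + card Nn + (k - 1) * card Ay"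
    proof -
      have "k * card AN \<le> k * card An" using cAN by simp
      then show ?thesis using cNN by linarith
    qed
    show ?thesis
    proof (cases "card Ay = 0")
      case False
      have "0 < m" using False bud cA by simp
      moreover have "inv1 k {f\<in>V. f x \<noteq> y} (m - 1)"
        unfolding inv1_def
      proof (intro exI conjI)
        show "finite AN" "finite NN" by fact+
        show "\<forall>A\<in>AN. A \<subseteq> G k \<and> std_win {..<k} A 1" by fact
        show "NN \<subseteq> G k" by fact
        show "{f\<in>V. f x \<noteq> y} \<subseteq> \<Union>AN \<union> NN" by fact
        show "card AN + j + r \<le> m - 1" using cAN cA bud False by simp
        have "(k - 1) * card Ay \<le> k * card Ay" by simp
        moreover have "k * card AA = k * card Ay + k * card An" using cA by (simp add: distrib_left)
        ultimately have "k * card AN + card NN \<le> k * card AA + card N" using PhiN cN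
          by linarith
        hence "(k * card AN + card NN) * (k - 1) ^ j \<le> (k * card AA + card N) * (k - 1) ^ j"
          by (rule mult_le_mono1)
        then show "(k * card AN + card NN) * (k - 1) ^ j \<le> (r + 1) * k ^ j" using pot by linarith
      qed
      ultimately show ?thesis by blast
    next
      case True
      have PhiN': "k * card AN + card NN \<le> k * card An + card Nn" using PhiN True by simp
      have kp: "Phi \<le> k * card Ny" using kPhi scy True by simp
      have PhiE: "Phi = k * card An + card Nn + card Ny" unfolding Phi_def using cA cN True by simp
      show ?thesis
      proof (cases j)
        case (Suc j')
        have "0 < m" using bud Suc by simp
        moreover have "inv1 k {f\<in>V. f x \<noteq> y} (m - 1)"
          unfolding inv1_def
        proof (intro exI conjI)
          show "finite AN" "finite NN" by fact+
          show "\<forall>A\<in>AN. A \<subseteq> G k \<and> std_win {..<k} A 1" by fact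
          show "NN \<subseteq> G k" by fact
          show "{f\<in>V. f x \<noteq> y} \<subseteq> \<Union>AN \<union> NN" by fact
          show "card AN + j' + r \<le> m - 1" using cAN cA bud Suc True by simp
          define P' where "P' = k * card AN + card NN"
          have "k * P' \<le> k * (k * card An + card Nn)" using PhiN' unfolding P'_def by simp
          also have "\<dots> = k * Phi - k * card Ny"
          proof -
            have "k * Phi = k * (k * card An + card Nn) + k * card Ny" using PhiE by (simp add: distrib_left)
            then show ?thesis by simp
          qed
          also have "\<dots> \<le> k * Phi - Phi" using kp by simp
          also have "\<dots> = (k - 1) * Phi" by (simp add: diff_mult_distrib)
          finally have kP: "k * P' \<le> (k - 1) * Phi" .
          have "k * (P' * (k - 1) ^ j') = (k * P') * (k - 1) ^ j'" by simp
          also have "\<dots> \<le> ((k - 1) * Phi) * (k - 1) ^ j'" using kP by (rule mult_le_mono1)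
          also have "\<dots> = Phi * (k - 1) ^ j" using Suc by simp
          also have "\<dots> \<le> (r + 1) * k ^ j" using pot unfolding Phi_def .
          also have "\<dots> = k * ((r + 1) * k ^ j')" using Suc by (simp add: algebra_simps)
          finally have "k * (P' * (k - 1) ^ j') \<le> k * ((r + 1) * k ^ j')" .
          then show "(k * card AN + card NN) * (k - 1) ^ j' \<le> (r + 1) * k ^ j'"
            using k unfolding P'_def by simp
        qed
        ultimately show ?thesis by blast
      next
        case 0
        have Pr: "Phi \<le> r + 1" using pot 0 unfolding Phi_def by simp
        have "1 \<le> card Ny" using kp PhiE PhiN_pos PhiN' by (cases "card Ny") auto
        hence lt: "k * card AN + card NN + 1 \<le> Phi" using PhiE PhiN' by simp
        have r1: "1 \<le> r" using lt Pr PhiN_pos by simp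
        have "0 < m" using bud r1 by simp
        moreover have "inv1 k {f\<in>V. f x \<noteq> y} (m - 1)"
          unfolding inv1_def
        proof (intro exI conjI)
          show "finite AN" "finite NN" by fact+
          show "\<forall>A\<in>AN. A \<subseteq> G k \<and> std_win {..<k} A 1" by fact
          show "NN \<subseteq> G k" by fact
          show "{f\<in>V. f x \<noteq> y} \<subseteq> \<Union>AN \<union> NN" by fact
          show "card AN + 0 + (r - 1) \<le> m - 1" using cAN cA bud 0 True r1 by simp
          show "(k * card AN + card NN) * (k - 1) ^ 0 \<le> (r - 1 + 1) * k ^ 0"
            using lt Pr r1 by simp
        qed
        ultimately show ?thesis by blast
      qed
    qed
  qed
  show ?thesis using yk invY invN by blast
qed


definition ph0 :: "nat \<Rightarrow> ('a \<Rightarrow> nat) set \<Rightarrow> nat \<Rightarrow> bool" where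
  "ph0 k V m \<longleftrightarrow> V \<subseteq> G k \<and> std_win {..<k} V 2 \<and>
     (\<exists>J. k * (k - 1) ^ J \<le> k ^ J \<and> J + 2 * k - 1 \<le> m)"

lemma step0:
  assumes k: "0 < k" and P: "ph0 k V m"
  shows "\<exists>y<k. ({f\<in>V. f x = y} \<noteq> {} \<longrightarrow> ph0 k {f\<in>V. f x = y} m) \<and>
     ({f\<in>V. f x \<noteq> y} \<noteq> {} \<longrightarrow> 0 < m \<and> inv1 k {f\<in>V. f x \<noteq> y} (m - 1))"
proof -
  obtain J where VG: "V \<subseteq> G k" and sV: "std_win {..<k} V 2"
    and J: "k * (k - 1) ^ J \<le> k ^ J" and Jm: "J + 2 * k - 1 \<le> m"
    using P unfolding ph0_def by blast
  obtain z where zk: "z \<in> {..<k}" and H: "\<forall>v. {f \<in> V. f x = v} \<noteq> {} \<longrightarrow>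
           (if v = z then std_win {..<k} {f \<in> V. f x = v} 2
            else 0 < (2::nat) \<and> std_win {..<k} {f \<in> V. f x = v} (2 - 1))"
    using std_unfold[OF sV] by blast
  have yes: "ph0 k {f\<in>V. f x = z} m" if ne: "{f\<in>V. f x = z} \<noteq> {}"
  proof -
    have "std_win {..<k} {f\<in>V. f x = z} 2" using H[rule_format, OF ne] by simp
    then show ?thesis unfolding ph0_def using VG J Jm by blast
  qed
  define AA where "AA = (\<lambda>v. {f\<in>V. f x = v}) ` ({..<k} - {z})"
  have cAA: "card AA \<le> k - 1"
  proof -
    have "card AA \<le> card ({..<k} - {z})" unfolding AA_def by (rule card_image_le) simp
    also have "\<dots> = k - 1" using zk by simp
    finally show ?thesis .
  qed
  have no: "0 < m \<and> inv1 k {f\<in>V. f x \<noteq> z} (m - 1)"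
  proof
    show "0 < m" using Jm k by simp
    show "inv1 k {f\<in>V. f x \<noteq> z} (m - 1)"
      unfolding inv1_def
    proof (intro exI conjI)
      show "finite AA" unfolding AA_def by simp
      show "finite {}" by simp
      show "\<forall>A\<in>AA. A \<subseteq> G k \<and> std_win {..<k} A 1"
      proof
        fix A assume "A \<in> AA"
        then obtain v where v: "v \<noteq> z" and A: "A = {f\<in>V. f x = v}" unfolding AA_def by blast
        have "A \<subseteq> G k" using A VG by auto
        moreover have "std_win {..<k} A 1"
        proof (cases "A = {}")
          case True then show ?thesis using std_empty[of "{..<k}"] k by auto
        next
          case False then show ?thesis using H[rule_format, of v] v A by simp
        qed
        ultimately show "A \<subseteq> G k \<and> std_win {..<k} A 1" ..
      qed
      show "{} \<subseteq> G k" by simp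
      show "{f\<in>V. f x \<noteq> z} \<subseteq> \<Union>AA \<union> {}"
      proof
        fix f assume f: "f \<in> {f\<in>V. f x \<noteq> z}"
        then have "f x < k" using VG by (auto simp: G_def)
        then have "{g\<in>V. g x = f x} \<in> AA" unfolding AA_def using f by auto
        moreover have "f \<in> {g\<in>V. g x = f x}" using f by auto
        ultimately show "f \<in> \<Union>AA \<union> {}" by blast
      qed
      show "card AA + J + (k - 1) \<le> m - 1" using cAA Jm k by simp
      have "k * card AA \<le> k * k" using cAA by (intro mult_le_mono2) linarith
      hence "(k * card AA + card {}) * (k - 1) ^ J \<le> (k * k) * (k - 1) ^ J"
        by (simp add: mult_le_mono1)
      also have "\<dots> = k * (k * (k - 1) ^ J)" by simp
      also have "\<dots> \<le> k * k ^ J" using J by simp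
      also have "\<dots> = (k - 1 + 1) * k ^ J" using k by simp
      finally show "(k * card AA + card {}) * (k - 1) ^ J \<le> (k - 1 + 1) * k ^ J" .
    qed
  qed
  show ?thesis using zk yes no by blast
qed

lemma main_bs:
  assumes k: "0 < k" and P: "ph0 k V m"
  shows "bs_win {..<k} V m"
proof -
  have "ph0 k V m \<or> inv1 k V m" using P by simp
  then show ?thesis
  proof (coinduct rule: bs_win.coinduct)
    case (bs_win V m)
    show ?case
    proof (intro exI conjI allI)
      fix x
      show "\<exists>y\<in>{..<k}.
                    ({f \<in> V. f x = y} \<noteq> {} \<longrightarrow>
                     (ph0 k {f \<in> V. f x = y} m \<or> inv1 k {f \<in> V. f x = y} m) \<or> bs_win {..<k} {f \<in> V. f x = y} m) \<and>
                    ({f \<in> V. f x \<noteq> y} \<noteq> {} \<longrightarrow>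
                     0 < m \<and>
                     ((ph0 k {f \<in> V. f x \<noteq> y} (m - 1) \<or> inv1 k {f \<in> V. f x \<noteq> y} (m - 1)) \<or>
                      bs_win {..<k} {f \<in> V. f x \<noteq> y} (m - 1)))"
        using bs_win
      proof
        assume "ph0 k V m"
        from step0[OF k this, of x] show ?thesis by auto
      next
        assume "inv1 k V m"
        from step1[OF k this, of x] show ?thesis by auto
      qed
    qed simp_all
  qed
qed

lemma real_part:
  assumes k: "0 < k"
  shows "k * (k - 1) ^ (nat \<lceil>real k * ln (real k)\<rceil>) \<le> k ^ (nat \<lceil>real k * ln (real k)\<rceil>)"
proof (cases "k = 1")
  case True then show ?thesis by simp
next
  case False
  hence k2: "2 \<le> k" using k by simp
  define J where "J = nat \<lceil>real k * ln (real k)\<rceil>"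
  define a where "a = real k"
  have a2: "2 \<le> a" using k2 unfolding a_def by simp
  have Ja: "a * ln a \<le> real J" unfolding J_def a_def by linarith
  have lnpos: "0 \<le> ln a" using a2 by simp
  have "ln ((a - 1) / a) \<le> (a - 1) / a - 1" using a2 by (intro ln_le_minus_one) auto
  also have "\<dots> = - 1 / a" using a2 by (simp add: field_simps)
  finally have l1: "ln (a - 1) - ln a \<le> - 1 / a" using a2 by (simp add: ln_div)
  have "real J * (ln (a - 1) - ln a) \<le> real J * (- 1 / a)"
    by (rule mult_left_mono[OF l1]) simp
  also have "\<dots> = - (real J / a)" by simp
  also have "\<dots> \<le> - ln a"
  proof -
    have "a * ln a / a \<le> real J / a" using Ja a2 by (intro divide_right_mono) auto
    then show ?thesis using a2 by simp
  qed
  finally have "ln a + real J * ln (a - 1) \<le> real J * ln a" by (simp add: algebra_simps)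
  hence "ln (a * (a - 1) ^ J) \<le> ln (a ^ J)" using a2 by (simp add: ln_mult ln_realpow)
  hence "a * (a - 1) ^ J \<le> a ^ J" using a2 by (subst (asm) ln_le_cancel_iff) auto
  hence "real (k * (k - 1) ^ J) \<le> real (k ^ J)" unfolding a_def using k2 by (simp add: of_nat_diff)
  then show ?thesis unfolding J_def of_nat_le_iff .
qed


theorem mainTheorem3:
  fixes k :: nat and F :: "('x \<Rightarrow> nat) set"
  assumes "0 < k"
    and "\<forall>f\<in>F. \<forall>x. f x < k"
    and "opt_std {..<k} F = 2"
  shows "opt_bs {..<k} F \<le> enat (nat \<lceil>real k * ln (real k)\<rceil> + 2 * k)"
proof -
  define S where "S = {m. std_win {..<k} F m}"
  have Sne: "S \<noteq> {}"
  proof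
    assume "S = {}"
    then have "opt_std {..<k} F = top" unfolding opt_std_def S_def[symmetric] by simp
    then show False using assms(3) by (simp add: top_enat_def)
  qed
  define m0 where "m0 = (LEAST m. m \<in> S)"
  have m0S: "m0 \<in> S" unfolding m0_def using Sne by (metis LeastI ex_in_conv)
  have "(INF m\<in>S. enat m) = enat m0"
  proof (rule antisym)
    show "(INF m\<in>S. enat m) \<le> enat m0" by (rule INF_lower[OF m0S])
    show "enat m0 \<le> (INF m\<in>S. enat m)"
      by (rule INF_greatest) (simp add: m0_def Least_le)
  qed
  then have "enat m0 = 2" using assms(3) unfolding opt_std_def S_def by simp
  then have "m0 = 2" by (metis enat.inject numeral_eq_enat)
  then have s2: "std_win {..<k} F 2" using m0S unfolding S_def by simp
  define M where "M = nat \<lceil>real k * ln (real k)\<rceil> + 2 * k"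
  have "ph0 k F M"
    unfolding ph0_def
  proof (intro conjI exI)
    show "F \<subseteq> G k" using assms(2) by (auto simp: G_def)
    show "std_win {..<k} F 2" by fact
    show "k * (k - 1) ^ nat \<lceil>real k * ln (real k)\<rceil> \<le> k ^ nat \<lceil>real k * ln (real k)\<rceil>"
      by (rule real_part[OF assms(1)])
    show "nat \<lceil>real k * ln (real k)\<rceil> + 2 * k - 1 \<le> M" unfolding M_def by simp
  qed
  then have "bs_win {..<k} F M" by (rule main_bs[OF assms(1)])
  then show ?thesis unfolding opt_bs_def M_def[symmetric] by (intro INF_lower) simp
qed

end
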